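(* Any solution $(\phi^{n+1},\mu^{n+1})\in\Phi_h\times M_h$ of the J$_\varepsilon$-scheme satisfies $$\int_\Omega\phi^{n+1}\,d\boldsymbol x=\int_\Omega\phi^n\,d\boldsymbol x$$ and $$\delta_tE(\phi^{n+1})+\int_\Omega M^J_\varepsilon(\phi^{n+1})|\nabla\mu^{n+1}|^2\,d\boldsymbol x\le0,$$ where $E(\phi)=\int_\Omega\big(\frac12|\nabla\phi|^2+F(\phi)\big)d\boldsymbol x$ and $M^J_\varepsilon(\phi^{n+1})|\nabla\mu^{n+1}|^2$ means $\big(M^J_\varepsilon(\phi^{n+1})\nabla\mu^{n+1}\big)\cdot\nabla\mu^{n+1}$.
   Context: $\Omega\subset\mathbb{R}^d$ ($d=1,2,3$) bounded, $\eta>0$, $\varepsilon\in(0,1/2)$. $F(\phi)=\frac1{4\eta^2}\phi^2(\phi-1)^2=F_c+F_e$ with $F_c(\phi)=\frac1{4\eta^2}(\phi^4-2\phi^3+\frac32\phi^2)$, $F_e(\phi)=-\frac1{8\eta^2}\phi^2$. $\Delta t=T/N$, $\delta_tf^{n+1}=(f^{n+1}-f^n)/\Delta t$. $\mathcal T_h$ is a structured triangulation of $\Omega$ in which every element $I$ has vertices $\boldsymbol x_0,\dots,\boldsymbol x_d$ with $\boldsymbol x_k-\boldsymbol x_0$ parallel to the $k$-th coordinate axis. $\Phi_h$ is the space of continuous piecewise $\mathbb{P}_1$ functions, $M_h$ the space of continuous piecewise $\mathbb{P}_k$ functions ($k\ge1$). $I_h$ is nodal $\mathbb{P}_1$ interpolation,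 $(f,g)_h=\int_\Omega I_h(fg)\,d\boldsymbol x$, $(\cdot,\cdot)$ the $L^2$ product. Let $J(\phi)=(1-2\phi)\arcsin(\sqrt{1-\phi})+\sqrt{(1-\phi)\phi}+2\arcsin(\sqrt{1/2})\,\phi$ on $[0,1]$ (so $J''(\phi)=1/\sqrt{\phi(1-\phi)}$), and $J_\varepsilon\in C^2(\mathbb{R})$ equal to $J$ on $[\varepsilon,1-\varepsilon]$ and to its second-order Taylor polynomial at $\varepsilon$ (resp. $1-\varepsilon$) for $\phi<\varepsilon$ (resp. $\phi>1-\varepsilon$). For $\phi\in\Phi_h$, $M^J_\varepsilon(\phi)$ is the piecewise constant diagonal matrix whose $k$-th entry on $I$ is $\Big(\frac{\phi(\boldsymbol x_k)-\phi(\boldsymbol x_0)}{J_\varepsilon'(\phi(\boldsymbol x_k))-J_\varepsilon'(\phi(\boldsymbol x_0))}\Big)^2$ if $\phi(\boldsymbol x_k)\neq\phi(\boldsymbol x_0)$ and $\big(1/J_\varepsilon''(\phi(\boldsymbol x_0))\big)^2$ otherwise. J$_\varepsilon$-scheme: given $\phi^n\in\Phi_h$, find $(\phi^{n+1},\mu^{n+1})\in\Phi_h\times M_h$ such that for all $(\bar\phi,\bar\mu)\in\Phi_h\times M_h$: $\frac1{\Delta t}(\phi^{n+1}-\phi^n,\bar\mu)_h+(M^J_\varepsilon(\phi^{n+1})\nabla\mu^{n+1},\nabla\bar\mu)=0$ and $(\nabla\phi^{n+1},\nabla\bar\phi)+(F_c'(\phi^{n+1})+F_e'(\phi^n),\bar\phi)=(\mu^{n+1},\bar\phi)_h$.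 *)

theory Defs
  imports "HOL-Analysis.Analysis"
begin

definition F :: "real \<Rightarrow> real \<Rightarrow> real" where
  "F \<eta> \<phi> = 1 / (4 * \<eta>^2) * \<phi>^2 * (\<phi> - 1)^2"

definition Fc :: "real \<Rightarrow> real \<Rightarrow> real" where
  "Fc \<eta> \<phi> = 1 / (4 * \<eta>^2) * (\<phi>^4 - 2 * \<phi>^3 + 3/2 * \<phi>^2)"

definition Fe :: "real \<Rightarrow> real \<Rightarrow> real" where
  "Fe \<eta> \<phi> = - 1 / (8 * \<eta>^2) * \<phi>^2"

definition J :: "real \<Rightarrow> real" where
  "J \<phi> = (1 - 2*\<phi>) * arcsin (sqrt (1 - \<phi>)) + sqrt ((1 - \<phi>) * \<phi>)
          + 2 * arcsin (sqrt (1/2)) * \<phi>"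

definition Jeps :: "real \<Rightarrow> real \<Rightarrow> real" where
  "Jeps \<epsilon> \<phi> =
     (if \<phi> < \<epsilon> then J \<epsilon> + deriv J \<epsilon> * (\<phi> - \<epsilon>) + deriv (deriv J) \<epsilon> / 2 * (\<phi> - \<epsilon>)^2
      else if \<phi> > 1 - \<epsilon> then J (1 - \<epsilon>) + deriv J (1 - \<epsilon>) * (\<phi> - (1 - \<epsilon>))
                 + deriv (deriv J) (1 - \<epsilon>) / 2 * (\<phi> - (1 - \<epsilon>))^2
      else J \<phi>)"

text \<open>An element is a pair (x0, h): its vertices are x0 and
  x_k = x0 + h k e_k, one for each coordinate axis k, so x_k - x0 is parallel
  to the k-th coordinate axis.\<close>
type_synonym 'd element = "(real^'d) \<times> ('d \<Rightarrow> real)"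

definition vtx :: "'d::finite element \<Rightarrow> 'd \<Rightarrow> real^'d" where
  "vtx I k = fst I + snd I k *\<^sub>R axis k 1"

definition verts :: "'d::finite element \<Rightarrow> (real^'d) set" where
  "verts I = insert (fst I) (range (vtx I))"

definition elem_set :: "'d::finite element \<Rightarrow> (real^'d) set" where
  "elem_set I = convex hull (verts I)"

definition structured_triangulation :: "'d::finite element set \<Rightarrow> (real^'d) set \<Rightarrow> bool" where
  "structured_triangulation T \<Omega> \<longleftrightarrow>
     finite T \<and> T \<noteq> {} \<and>
     (\<forall>I\<in>T. \<forall>k. snd I k \<noteq> 0) \<and>
     (\<forall>I\<in>T. \<forall>I'\<in>T. I \<noteq> I' \<longrightarrow> verts I \<noteq> verts I') \<and>
     (\<forall>I\<in>T. \<forall>I'\<in>T. elem_set I \<inter> elem_set I' = convex hull (verts I \<inter> verts I')) \<and>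
     \<Omega> = \<Union> (elem_set ` T)"

definition bary :: "'d::finite element \<Rightarrow> 'd \<Rightarrow> real^'d \<Rightarrow> real" where
  "bary I k x = (x $ k - fst I $ k) / snd I k"

definition interp_el :: "'d::finite element \<Rightarrow> (real^'d \<Rightarrow> real) \<Rightarrow> real^'d \<Rightarrow> real" where
  "interp_el I g x = (1 - (\<Sum>k\<in>UNIV. bary I k x)) * g (fst I)
                     + (\<Sum>k\<in>UNIV. bary I k x * g (vtx I k))"

text \<open>The element of the mesh used at a point x (unique up to a null set).\<close>
definition elem_at :: "'d::finite element set \<Rightarrow> real^'d \<Rightarrow> 'd element" where
  "elem_at T x = (SOME I. I \<in> T \<and> x \<in> elem_set I)"

definition Ih :: "'d::finite element set \<Rightarrow> (real^'d \<Rightarrow> real) \<Rightarrow> real^'d \<Rightarrow> real" where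
  "Ih T g x = interp_el (elem_at T x) g x"

definition lumped :: "'d::finite element set \<Rightarrow> (real^'d) set \<Rightarrow> (real^'d \<Rightarrow> real)
                       \<Rightarrow> (real^'d \<Rightarrow> real) \<Rightarrow> real" where
  "lumped T \<Omega> f g = integral \<Omega> (Ih T (\<lambda>x. f x * g x))"

definition poly_deg_le :: "nat \<Rightarrow> (real^'d::finite \<Rightarrow> real) \<Rightarrow> bool" where
  "poly_deg_le k p \<longleftrightarrow> (\<exists>c :: ('d \<Rightarrow> nat) \<Rightarrow> real. \<forall>x.
      p x = (\<Sum>\<alpha>\<in>{\<alpha>. sum \<alpha> UNIV \<le> k}. c \<alpha> * (\<Prod>i\<in>UNIV. (x $ i) ^ \<alpha> i)))"

definition FEspace :: "'d::finite element set \<Rightarrow> (real^'d) set \<Rightarrow> nat \<Rightarrow> (real^'d \<Rightarrow> real) set" where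
  "FEspace T \<Omega> k = {f. continuous_on \<Omega> f \<and>
      (\<forall>I\<in>T. \<exists>p. poly_deg_le k p \<and> (\<forall>x\<in>elem_set I. f x = p x))}"

text \<open>(Broken) gradient; defined at all points where f is differentiable,
  in particular in the interior of every element.\<close>
definition grad :: "(real^'d::finite \<Rightarrow> real) \<Rightarrow> real^'d \<Rightarrow> real^'d" where
  "grad f x = (SOME g. (f has_derivative (\<lambda>h. g \<bullet> h)) (at x))"

definition MJ_entry :: "real \<Rightarrow> (real^'d::finite \<Rightarrow> real) \<Rightarrow> 'd element \<Rightarrow> 'd \<Rightarrow> real" where
  "MJ_entry \<epsilon> \<phi> I k =
     (let a = \<phi> (fst I); b = \<phi> (vtx I k) in
      if b \<noteq> a then ((b - a) / (deriv (Jeps \<epsilon>) b - deriv (Jeps \<epsilon>) a))^2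
      else (1 / deriv (deriv (Jeps \<epsilon>)) a)^2)"

definition mob_form :: "real \<Rightarrow> 'd::finite element set \<Rightarrow> (real^'d) set \<Rightarrow> (real^'d \<Rightarrow> real)
                        \<Rightarrow> (real^'d \<Rightarrow> real) \<Rightarrow> (real^'d \<Rightarrow> real) \<Rightarrow> real" where
  "mob_form \<epsilon> T \<Omega> \<phi> \<mu> \<nu> = integral \<Omega> (\<lambda>x.
      \<Sum>k\<in>UNIV. MJ_entry \<epsilon> \<phi> (elem_at T x) k * (grad \<mu> x $ k) * (grad \<nu> x $ k))"

definition energy :: "real \<Rightarrow> (real^'d::finite) set \<Rightarrow> (real^'d \<Rightarrow> real) \<Rightarrow> real" where
  "energy \<eta> \<Omega> \<phi> = integral \<Omega> (\<lambda>x. 1/2 * (norm (grad \<phi> x))^2 + F \<eta> (\<phi> x))"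

definition Jeps_scheme_step ::
  "real \<Rightarrow> real \<Rightarrow> real \<Rightarrow> nat \<Rightarrow> 'd::finite element set \<Rightarrow> (real^'d) set
   \<Rightarrow> (real^'d \<Rightarrow> real) \<Rightarrow> (real^'d \<Rightarrow> real) \<Rightarrow> (real^'d \<Rightarrow> real) \<Rightarrow> bool" where
  "Jeps_scheme_step \<eta> \<epsilon> dt k T \<Omega> \<phi>n \<phi>1 \<mu>1 \<longleftrightarrow>
     \<phi>1 \<in> FEspace T \<Omega> 1 \<and> \<mu>1 \<in> FEspace T \<Omega> k \<and>
     (\<forall>\<mu>b \<in> FEspace T \<Omega> k.
        1 / dt * lumped T \<Omega> (\<lambda>x. \<phi>1 x - \<phi>n x) \<mu>b + mob_form \<epsilon> T \<Omega> \<phi>1 \<mu>1 \<mu>b = 0) \<and>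
     (\<forall>\<phi>b \<in> FEspace T \<Omega> 1.
        integral \<Omega> (\<lambda>x. grad \<phi>1 x \<bullet> grad \<phi>b x)
        + integral \<Omega> (\<lambda>x. (deriv (Fc \<eta>) (\<phi>1 x) + deriv (Fe \<eta>) (\<phi>n x)) * \<phi>b x)
        = lumped T \<Omega> \<mu>1 \<phi>b)"

end

theory Submission
  imports Defs
begin


lemma cont_compact_integrable:
  fixes f :: "'a::euclidean_space \<Rightarrow> real"
  assumes "compact S" "continuous_on S f"
  shows "f integrable_on S"
proof -
  have "integrable lborel (\<lambda>x. indicator S x *\<^sub>R f x)"
    by (rule borel_integrable_compact[OF assms])
  then have "(\<lambda>x. indicator S x *\<^sub>R f x) integrable_on UNIV"
    by (rule integrable_on_lborel)
  then have "(\<lambda>x. if x \<in> S then f x else 0) integrable_on UNIV"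
  proof -
    have "(\<lambda>x. indicator S x *\<^sub>R f x) = (\<lambda>x. if x \<in> S then f x else 0)"
      by (auto simp: indicator_def)
    then show ?thesis using \<open>(\<lambda>x. indicator S x *\<^sub>R f x) integrable_on UNIV\<close> by simp
  qed
  then show ?thesis by (simp add: integrable_restrict_UNIV)
qed

lemma grad_eq:
  assumes "(f has_derivative (\<lambda>h. g \<bullet> h)) (at x)"
  shows "grad f x = g"
proof -
  have "(f has_derivative (\<lambda>h. grad f x \<bullet> h)) (at x)"
    unfolding grad_def by (rule someI[where P="\<lambda>g. (f has_derivative (\<lambda>h. g \<bullet> h)) (at x)"]) (rule assms)
  from has_derivative_unique[OF this assms]
  have "(\<lambda>h. grad f x \<bullet> h) = (\<lambda>h. g \<bullet> h)" .
  then have "grad f x \<bullet> (grad f x - g) = g \<bullet> (grad f x - g)" by metis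
  then have "(grad f x - g) \<bullet> (grad f x - g) = 0" by (simp add: inner_diff_left)
  then show ?thesis by simp
qed

lemma mono_affine:
  fixes \<alpha> :: "'d::finite \<Rightarrow> nat"
  assumes "sum \<alpha> UNIV \<le> 1"
  shows "\<exists>a b. \<forall>x::real^'d. (\<Prod>i\<in>UNIV. (x $ i) ^ \<alpha> i) = a + b \<bullet> x"
proof (cases "\<forall>i. \<alpha> i = 0")
  case True
  then show ?thesis by (intro exI[of _ 1] exI[of _ 0]) simp
next
  case False
  then obtain j where j: "\<alpha> j \<noteq> 0" by auto
  have le: "\<alpha> j + \<alpha> i \<le> sum \<alpha> UNIV" if "i \<noteq> j" for i
  proof -
    have "sum \<alpha> {i, j} \<le> sum \<alpha> UNIV" by (rule sum_mono2) auto
    then show ?thesis using that by simp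
  qed
  have aj: "\<alpha> j = 1" using j assms member_le_sum[of j UNIV \<alpha>] by simp
  have ai: "\<alpha> i = 0" if "i \<noteq> j" for i using le[OF that] aj assms by simp
  have "(\<Prod>i\<in>UNIV. (x $ i) ^ \<alpha> i) = axis j 1 \<bullet> x" for x :: "real^'d"
  proof -
    have "(\<Prod>i\<in>UNIV. (x $ i) ^ \<alpha> i) = (x $ j) ^ \<alpha> j * (\<Prod>i\<in>UNIV - {j}. (x $ i) ^ \<alpha> i)"
      by (simp add: prod.remove)
    also have "(\<Prod>i\<in>UNIV - {j}. (x $ i) ^ \<alpha> i) = 1"
      by (rule prod.neutral) (auto simp: ai)
    finally show ?thesis using aj by (simp add: inner_axis')
  qed
  then show ?thesis by (intro exI[of _ 0] exI[of _ "axis j 1"]) simp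
qed

lemma poly1_affine:
  assumes "poly_deg_le 1 (p :: real^'d::finite \<Rightarrow> real)"
  shows "\<exists>a v. \<forall>x. p x = a + v \<bullet> x"
proof -
  obtain c where c: "\<And>x. p x = (\<Sum>\<alpha>\<in>{\<alpha>. sum \<alpha> UNIV \<le> 1}. c \<alpha> * (\<Prod>i\<in>UNIV. (x $ i) ^ \<alpha> i))"
    using assms unfolding poly_deg_le_def by blast
  have "\<forall>\<alpha>\<in>{\<alpha>::'d\<Rightarrow>nat. sum \<alpha> UNIV \<le> 1}. \<exists>ab. \<forall>x::real^'d. (\<Prod>i\<in>UNIV. (x $ i) ^ \<alpha> i) = fst ab + snd ab \<bullet> x"
    using mono_affine by fastforce
  then obtain AB where AB: "\<And>\<alpha> x. \<alpha> \<in> {\<alpha>::'d\<Rightarrow>nat. sum \<alpha> UNIV \<le> 1} \<Longrightarrow> (\<Prod>i\<in>UNIV. ((x::real^'d) $ i) ^ \<alpha> i) = fst (AB \<alpha>) + snd (AB \<alpha>) \<bullet> x"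
    by metis
  have "p x = (\<Sum>\<alpha>\<in>{\<alpha>. sum \<alpha> UNIV \<le> 1}. c \<alpha> * fst (AB \<alpha>)) + (\<Sum>\<alpha>\<in>{\<alpha>. sum \<alpha> UNIV \<le> 1}. c \<alpha> *\<^sub>R snd (AB \<alpha>)) \<bullet> x" for x
  proof -
    have "p x = (\<Sum>\<alpha>\<in>{\<alpha>. sum \<alpha> UNIV \<le> 1}. c \<alpha> * fst (AB \<alpha>) + c \<alpha> * (snd (AB \<alpha>) \<bullet> x))"
      unfolding c by (rule sum.cong) (simp_all only: AB distrib_left)
    then show ?thesis by (simp add: sum.distrib inner_sum_left)
  qed
  then show ?thesis by blast
qed

lemma finite_verts: "finite (verts (I :: 'd::finite element))"
  unfolding verts_def by simp

lemma elem_compact: "compact (elem_set (I :: 'd::finite element))"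
  unfolding elem_set_def by (intro compact_convex_hull finite_imp_compact finite_verts)

lemma elem_convex: "convex (elem_set (I :: 'd::finite element))"
  unfolding elem_set_def by simp

lemma verts_in_elem: "fst I \<in> elem_set I" "vtx I k \<in> elem_set I"
  unfolding elem_set_def verts_def by (auto intro: hull_inc)

lemma Omega_compact:
  assumes "structured_triangulation T \<Omega>"
  shows "compact \<Omega>"
  using assms unfolding structured_triangulation_def
  by (auto intro!: compact_Union elem_compact)

lemma FE_affine:
  assumes "f \<in> FEspace T \<Omega> 1" "I \<in> T"
  shows "\<exists>a v. \<forall>x\<in>elem_set I. f x = a + v \<bullet> x"
proof -
  have fa: "\<forall>I\<in>T. \<exists>p. poly_deg_le 1 p \<and> (\<forall>x\<in>elem_set I. f x = p x)"
    using assms(1) unfolding FEspace_def by simp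
  obtain p where "poly_deg_le 1 p" "\<forall>x\<in>elem_set I. f x = p x"
    using bspec[OF fa assms(2)] by (elim exE conjE)
  with poly1_affine[of p] show ?thesis by metis
qed

lemma FE_grad:
  assumes "f \<in> FEspace T \<Omega> 1" "I \<in> T"
  shows "\<exists>v. \<forall>x\<in>interior (elem_set I). (f has_derivative (\<lambda>h. v \<bullet> h)) (at x) \<and> grad f x = v"
proof -
  obtain a v where av: "\<forall>x\<in>elem_set I. f x = a + v \<bullet> x"
    using FE_affine[OF assms] by blast
  have "(f has_derivative (\<lambda>h. v \<bullet> h)) (at x)" if x: "x \<in> interior (elem_set I)" for x
  proof -
    have "((\<lambda>y. a + v \<bullet> y) has_derivative (\<lambda>h. v \<bullet> h)) (at x)"
      by (auto intro!: derivative_eq_intros)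
    then show ?thesis
      by (rule has_derivative_transform_within_open[OF _ open_interior x])
         (use av interior_subset in \<open>auto dest: subsetD[OF interior_subset]\<close>)
  qed
  then show ?thesis using grad_eq by blast
qed

lemma pw_const_abs_integrable:
  assumes "structured_triangulation T \<Omega>"
    and "\<forall>I\<in>T. \<exists>c. \<forall>x\<in>interior (elem_set I). h x = c"
  shows "(h :: real^'d::finite \<Rightarrow> real) absolutely_integrable_on \<Omega>"
proof -
  have el: "h absolutely_integrable_on elem_set I" if IT: "I \<in> T" for I
  proof -
    obtain c where c: "\<forall>x\<in>interior (elem_set I). h x = c" using bspec[OF assms(2) IT] by (elim exE)
    have "(\<lambda>x. c) absolutely_integrable_on elem_set I"
      by (intro absolutely_integrable_on_const lmeasurable_compact elem_compact)
    then show ?thesis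
    proof (rule absolutely_integrable_spike[OF _ negligible_convex_frontier[OF elem_convex[of I]]])
      fix x assume "x \<in> elem_set I - frontier (elem_set I)"
      then have "x \<in> interior (elem_set I)"
        using closure_subset by (auto simp: frontier_def)
      then show "h x = c" using c by blast
    qed
  qed
  have fin: "finite T" and om: "\<Omega> = \<Union> (elem_set ` T)"
    using assms(1) unfolding structured_triangulation_def by auto
  have "F \<subseteq> T \<Longrightarrow> h absolutely_integrable_on \<Union> (elem_set ` F)" if "finite F" for F
    using that
  proof (induction F rule: finite_induct)
    case empty
    then show ?case by (simp add: absolutely_integrable_negligible)
  next
    case (insert I F)
    then show ?case by (auto intro!: absolutely_integrable_Un el)
  qed
  then show ?thesis using fin om by auto
qed

lemma ae_interior:
  assumes "structured_triangulation T \<Omega>" "x \<in> \<Omega>" "x \<notin> \<Union> ((\<lambda>I. frontier (elem_set I)) ` T)"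
  shows "\<exists>I\<in>T. x \<in> interior (elem_set I)"
proof -
  obtain I where I: "I \<in> T" "x \<in> elem_set I"
    using assms(1,2) unfolding structured_triangulation_def by auto
  then have "x \<notin> frontier (elem_set I)" using assms(3) by auto
  then show ?thesis using I closure_subset by (auto simp: frontier_def)
qed

lemma negl_N:
  assumes "structured_triangulation T \<Omega>"
  shows "negligible (\<Union> ((\<lambda>I. frontier (elem_set I)) ` (T :: 'd::finite element set)))"
  using assms unfolding structured_triangulation_def
  by (auto intro!: negligible_Union negligible_convex_frontier elem_convex)

lemma integral_le_ae:
  fixes f g :: "'a::euclidean_space \<Rightarrow> real"
  assumes "f integrable_on S" "g integrable_on S" "negligible N" "\<And>x. x \<in> S - N \<Longrightarrow> f x \<le> g x"
  shows "integral S f \<le> integral S g"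
proof -
  let ?f = "\<lambda>x. if x \<in> N then 0 else f x" and ?g = "\<lambda>x. if x \<in> N then 0 else g x"
  have i1: "integral S f = integral S ?f" by (rule integral_spike[OF assms(3)]) auto
  have i2: "integral S g = integral S ?g" by (rule integral_spike[OF assms(3)]) auto
  have "?f integrable_on S" by (rule integrable_spike[OF assms(1,3)]) auto
  moreover have "?g integrable_on S" by (rule integrable_spike[OF assms(2,3)]) auto
  ultimately have "integral S ?f \<le> integral S ?g"
    by (rule integral_le) (use assms(4) in auto)
  then show ?thesis using i1 i2 by simp
qed

lemma Ih_FE:
  assumes "structured_triangulation T \<Omega>" "g \<in> FEspace T \<Omega> 1" "x \<in> \<Omega>"
  shows "Ih T g x = g x"
proof -
  have ex: "\<exists>I. I \<in> T \<and> x \<in> elem_set I"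
    using assms(1,3) unfolding structured_triangulation_def by auto
  define I where "I = elem_at T x"
  have I: "I \<in> T" "x \<in> elem_set I"
    unfolding I_def elem_at_def by (rule someI_ex[OF ex, THEN conjunct1], rule someI_ex[OF ex, THEN conjunct2])
  obtain a v where av: "\<forall>y\<in>elem_set I. g y = a + v \<bullet> y"
    using FE_affine[OF assms(2) I(1)] by blast
  have hnz: "snd I k \<noteq> 0" for k using assms(1) I(1) unfolding structured_triangulation_def by auto
  have bh: "bary I k x * snd I k = x $ k - fst I $ k" for k
    using hnz[of k] by (simp add: bary_def)
  have gv: "g (vtx I k) = a + v \<bullet> fst I + snd I k * v $ k" for k
    using av verts_in_elem(2)[of I k] by (simp add: vtx_def inner_add_right inner_axis)
  have g0: "g (fst I) = a + v \<bullet> fst I" using av verts_in_elem(1)[of I] by simp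
  have "interp_el I g x = (1 - (\<Sum>k\<in>UNIV. bary I k x)) * (a + v \<bullet> fst I)
        + (\<Sum>k\<in>UNIV. bary I k x * (a + v \<bullet> fst I) + (bary I k x * snd I k) * v $ k)"
    unfolding interp_el_def g0 gv by (simp add: algebra_simps)
  also have "(\<Sum>k\<in>UNIV. bary I k x * (a + v \<bullet> fst I) + (bary I k x * snd I k) * v $ k)
      = (\<Sum>k\<in>UNIV. bary I k x) * (a + v \<bullet> fst I) + (\<Sum>k\<in>UNIV. (x $ k - fst I $ k) * v $ k)"
    unfolding bh by (simp add: sum.distrib sum_distrib_right)
  also have "(1 - (\<Sum>k\<in>UNIV. bary I k x)) * (a + v \<bullet> fst I) + (
      (\<Sum>k\<in>UNIV. bary I k x) * (a + v \<bullet> fst I) + (\<Sum>k\<in>UNIV. (x $ k - fst I $ k) * v $ k))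
      = a + v \<bullet> fst I + (\<Sum>k\<in>UNIV. (x $ k - fst I $ k) * v $ k)"
    by (simp add: algebra_simps)
  also have "(\<Sum>k\<in>UNIV. (x $ k - fst I $ k) * v $ k) = v \<bullet> (x - fst I)"
    by (simp add: inner_vec_def mult.commute)
  finally have "interp_el I g x = a + v \<bullet> x" by (simp add: inner_diff_right)
  then show ?thesis using av I unfolding Ih_def I_def by simp
qed



lemma dFc: assumes "\<eta> \<noteq> 0" shows "deriv (Fc \<eta>) y = 1/(4*\<eta>^2) * (4*y^3 - 6*y^2 + 3*y)"
proof -
  have e: "Fc \<eta> = (\<lambda>\<phi>. 1 / (4 * \<eta>^2) * (\<phi>^4 - 2 * \<phi>^3 + 3/2 * \<phi>^2))"
    by (rule ext) (simp add: Fc_def)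
  have "(Fc \<eta> has_real_derivative 1/(4*\<eta>^2) * (4*y^3 - 6*y^2 + 3*y)) (at y)"
    unfolding e by (auto intro!: derivative_eq_intros simp: algebra_simps power2_eq_square power3_eq_cube assms)
  then show ?thesis by (rule DERIV_imp_deriv)
qed

lemma dFe: assumes "\<eta> \<noteq> 0" shows "deriv (Fe \<eta>) y = - y/(4*\<eta>^2)"
proof -
  have e: "Fe \<eta> = (\<lambda>\<phi>. - 1 / (8 * \<eta>^2) * \<phi>^2)"
    by (rule ext) (simp add: Fe_def)
  have "(Fe \<eta> has_real_derivative - y/(4*\<eta>^2)) (at y)"
    unfolding e by (auto intro!: derivative_eq_intros simp: field_simps power2_eq_square assms)
  then show ?thesis by (rule DERIV_imp_deriv)
qed

lemma aux2: fixes x y z :: real shows "2*(x - y) = z \<Longrightarrow> 0 \<le> z \<Longrightarrow> y \<le> x" by (simp add: algebra_simps)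

lemma poly_ineq:
  fixes a b :: real
  shows "a^2*(a-1)^2 - b^2*(b-1)^2 \<le> (4*a^3 - 6*a^2 + 3*a - b) * (a - b)"
proof -
  have "2 * ((4*a^3 - 6*a^2 + 3*a - b) * (a - b) - (a^2*(a-1)^2 - b^2*(b-1)^2))
        = (b-a)^2 * (2*(b+a-1)^2 + (2*a-1)^2 + 1)"
    by (simp add: power2_eq_square power3_eq_cube power4_eq_xxxx algebra_simps)
  moreover have "(b-a)^2 * (2*(b+a-1)^2 + (2*a-1)^2 + 1) \<ge> 0" by simp
  ultimately show ?thesis using aux2 by blast
qed

lemma F_ineq:
  assumes "\<eta> > 0"
  shows "F \<eta> a - F \<eta> b \<le> (deriv (Fc \<eta>) a + deriv (Fe \<eta>) b) * (a - b)"
proof -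
  have K: "1/(4*\<eta>^2) > 0" using assms by simp
  have "F \<eta> a - F \<eta> b = 1/(4*\<eta>^2) * (a^2*(a-1)^2 - b^2*(b-1)^2)"
    by (simp add: F_def algebra_simps)
  also have "\<dots> \<le> 1/(4*\<eta>^2) * ((4*a^3 - 6*a^2 + 3*a - b) * (a - b))"
    by (rule mult_left_mono[OF poly_ineq]) (use K in simp)
  also have "\<dots> = (deriv (Fc \<eta>) a + deriv (Fe \<eta>) b) * (a - b)"
    using assms by (simp add: dFc dFe field_simps)
  finally show ?thesis .
qed

lemma vec_ineq:
  fixes v w :: "real^'d::finite"
  shows "1/2 * (norm v)^2 - 1/2 * (norm w)^2 \<le> v \<bullet> (v - w)"
proof -
  have "0 \<le> (v - w) \<bullet> (v - w)" by simp
  then show ?thesis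
    by (simp add: power2_norm_eq_inner inner_diff_left inner_diff_right inner_commute)
qed

lemma finite_multi: "finite {\<alpha>::'d::finite \<Rightarrow> nat. sum \<alpha> UNIV \<le> k}"
proof (rule finite_subset)
  show "{\<alpha>::'d \<Rightarrow> nat. sum \<alpha> UNIV \<le> k} \<subseteq> PiE UNIV (\<lambda>_. {..k})"
  proof
    fix \<alpha> :: "'d \<Rightarrow> nat" assume "\<alpha> \<in> {\<alpha>. sum \<alpha> UNIV \<le> k}"
    then have "sum \<alpha> UNIV \<le> k" by simp
    then have "\<alpha> i \<le> k" for i using member_le_sum[of i UNIV \<alpha>] by simp
    then show "\<alpha> \<in> PiE UNIV (\<lambda>_. {..k})" by (simp add: PiE_UNIV_domain)
  qed
  show "finite (PiE UNIV (\<lambda>_::'d. {..k}))" by (rule finite_PiE) auto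
qed
lemma const_FE: fixes T :: "'d::finite element set" shows "(\<lambda>x. 1) \<in> FEspace T \<Omega> k"
proof -
  let ?S = "{\<alpha>::'d \<Rightarrow> nat. sum \<alpha> UNIV \<le> k}"
  have "poly_deg_le k (\<lambda>x::real^'d. 1)"
    unfolding poly_deg_le_def
  proof (intro exI allI)
    fix x :: "real^'d"
    have "(\<Sum>\<alpha>\<in>?S. (if \<alpha> = (\<lambda>_. 0) then 1 else 0) * (\<Prod>i\<in>UNIV. (x $ i) ^ \<alpha> i))
        = (\<Sum>\<alpha>\<in>?S. if \<alpha> = (\<lambda>_. 0) then 1 else 0)"
      by (intro sum.cong) auto
    also have "\<dots> = 1"
    proof -
      have "(\<lambda>_. 0) \<in> ?S" by simp
      then show ?thesis using sum.delta[OF finite_multi[of k], of "\<lambda>_::'d. 0" "\<lambda>_. 1::real"] by presburger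
    qed
    finally show "1 = (\<Sum>\<alpha>\<in>?S. (if \<alpha> = (\<lambda>_. 0) then 1 else 0) * (\<Prod>i\<in>UNIV. (x $ i) ^ \<alpha> i))" by simp
  qed
  then show ?thesis unfolding FEspace_def by (auto intro: continuous_on_const)
qed

lemma diff_FE:
  assumes "f \<in> FEspace T \<Omega> k" "g \<in> FEspace T \<Omega> k"
  shows "(\<lambda>x. f x - g x) \<in> FEspace T \<Omega> k"
proof -
  have "\<exists>p. poly_deg_le k p \<and> (\<forall>x\<in>elem_set I. f x - g x = p x)" if IT: "I \<in> T" for I
  proof -
    have f: "\<forall>I\<in>T. \<exists>p. poly_deg_le k p \<and> (\<forall>x\<in>elem_set I. f x = p x)"
      using assms(1) unfolding FEspace_def by simp
    have g: "\<forall>I\<in>T. \<exists>p. poly_deg_le k p \<and> (\<forall>x\<in>elem_set I. g x = p x)"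
      using assms(2) unfolding FEspace_def by simp
    obtain p where p: "poly_deg_le k p" "\<forall>x\<in>elem_set I. f x = p x"
      using bspec[OF f IT] by (elim exE conjE)
    obtain q where q: "poly_deg_le k q" "\<forall>x\<in>elem_set I. g x = q x"
      using bspec[OF g IT] by (elim exE conjE)
    obtain c where c: "\<And>x. p x = (\<Sum>\<alpha>\<in>{\<alpha>. sum \<alpha> UNIV \<le> k}. c \<alpha> * (\<Prod>i\<in>UNIV. (x $ i) ^ \<alpha> i))"
      using p(1) unfolding poly_deg_le_def by blast
    obtain d where d: "\<And>x. q x = (\<Sum>\<alpha>\<in>{\<alpha>. sum \<alpha> UNIV \<le> k}. d \<alpha> * (\<Prod>i\<in>UNIV. (x $ i) ^ \<alpha> i))"
      using q(1) unfolding poly_deg_le_def by blast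
    have "poly_deg_le k (\<lambda>x. p x - q x)"
      unfolding poly_deg_le_def
      by (rule exI[of _ "\<lambda>\<alpha>. c \<alpha> - d \<alpha>"]) (simp add: c d sum_subtractf[symmetric] left_diff_distrib)
    then show ?thesis using p q by auto
  qed
  then show ?thesis using assms unfolding FEspace_def by (auto intro: continuous_on_diff)
qed



theorem lemma6:
  fixes T :: "'d::finite element set" and \<Omega> :: "(real^'d) set"
    and \<eta> \<epsilon> dt :: real and k :: nat
    and \<phi>n \<phi>1 \<mu>1 :: "real^'d \<Rightarrow> real"
  assumes "CARD('d) \<le> 3"
    and "structured_triangulation T \<Omega>"
    and "\<eta> > 0" and "0 < \<epsilon>" and "\<epsilon> < 1/2"
    and "dt > 0" and "k \<ge> 1"
    and "\<phi>n \<in> FEspace T \<Omega> 1"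
    and "Jeps_scheme_step \<eta> \<epsilon> dt k T \<Omega> \<phi>n \<phi>1 \<mu>1"
  shows "integral \<Omega> \<phi>1 = integral \<Omega> \<phi>n \<and>
         (energy \<eta> \<Omega> \<phi>1 - energy \<eta> \<Omega> \<phi>n) / dt + mob_form \<epsilon> T \<Omega> \<phi>1 \<mu>1 \<mu>1 \<le> 0"
proof -
  note tri = assms(2)
  have \<phi>1: "\<phi>1 \<in> FEspace T \<Omega> 1" and \<mu>1: "\<mu>1 \<in> FEspace T \<Omega> k"
    and eq1: "\<And>\<mu>b. \<mu>b \<in> FEspace T \<Omega> k \<Longrightarrow>
        1 / dt * lumped T \<Omega> (\<lambda>x. \<phi>1 x - \<phi>n x) \<mu>b + mob_form \<epsilon> T \<Omega> \<phi>1 \<mu>1 \<mu>b = 0"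
    and eq2: "\<And>\<phi>b. \<phi>b \<in> FEspace T \<Omega> 1 \<Longrightarrow>
        integral \<Omega> (\<lambda>x. grad \<phi>1 x \<bullet> grad \<phi>b x)
        + integral \<Omega> (\<lambda>x. (deriv (Fc \<eta>) (\<phi>1 x) + deriv (Fe \<eta>) (\<phi>n x)) * \<phi>b x)
        = lumped T \<Omega> \<mu>1 \<phi>b"
    using assms(9) unfolding Jeps_scheme_step_def by auto
  define \<phi>b where "\<phi>b = (\<lambda>x. \<phi>1 x - \<phi>n x)"
  have \<phi>bFE: "\<phi>b \<in> FEspace T \<Omega> 1" unfolding \<phi>b_def by (rule diff_FE[OF \<phi>1 assms(8)])
  have cpt: "compact \<Omega>" by (rule Omega_compact[OF tri])
  have c1: "continuous_on \<Omega> \<phi>1" using \<phi>1 unfolding FEspace_def by simp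
  have cn: "continuous_on \<Omega> \<phi>n" using assms(8) unfolding FEspace_def by simp
  have i1: "\<phi>1 integrable_on \<Omega>" by (rule cont_compact_integrable[OF cpt c1])
  have iN: "\<phi>n integrable_on \<Omega>" by (rule cont_compact_integrable[OF cpt cn])
  have mass: "integral \<Omega> \<phi>1 = integral \<Omega> \<phi>n"
  proof -
    have g0: "grad (\<lambda>x. 1) x = 0" for x :: "real^'d"
      by (rule grad_eq) (simp add: has_derivative_const)
    have mob0: "mob_form \<epsilon> T \<Omega> \<phi>1 \<mu>1 (\<lambda>x. 1) = 0"
      unfolding mob_form_def g0 by simp
    have "lumped T \<Omega> \<phi>b (\<lambda>x. 1) = integral \<Omega> \<phi>b"
      unfolding lumped_def
    proof (rule integral_cong)
      fix x assume "x \<in> \<Omega>"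
      then show "Ih T (\<lambda>x. \<phi>b x * 1) x = \<phi>b x" using Ih_FE[OF tri \<phi>bFE] by simp
    qed
    also have "\<dots> = integral \<Omega> \<phi>1 - integral \<Omega> \<phi>n"
      unfolding \<phi>b_def by (rule integral_diff[OF i1 iN])
    finally have "lumped T \<Omega> \<phi>b (\<lambda>x. 1) = integral \<Omega> \<phi>1 - integral \<Omega> \<phi>n" .
    moreover have "1 / dt * lumped T \<Omega> \<phi>b (\<lambda>x. 1) = 0"
      using eq1[OF const_FE] mob0 unfolding \<phi>b_def by simp
    ultimately show ?thesis using assms(6) by simp
  qed
  let ?N = "\<Union> ((\<lambda>I. frontier (elem_set I)) ` T)"
  have negN: "negligible ?N" by (rule negl_N[OF tri])
  have gradpw: "\<forall>I\<in>T. \<exists>c. \<forall>x\<in>interior (elem_set I). G (grad f x) = c"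
    if "f \<in> FEspace T \<Omega> 1" for f and G :: "real^'d \<Rightarrow> real"
    using FE_grad[OF that] by metis
  have contF: "continuous_on \<Omega> (\<lambda>x. F \<eta> (\<phi> x))" if "continuous_on \<Omega> \<phi>" for \<phi>
    unfolding F_def by (intro continuous_intros that)
  have ie: "(\<lambda>x. 1/2 * (norm (grad \<phi> x))^2 + F \<eta> (\<phi> x)) integrable_on \<Omega>"
    if "\<phi> \<in> FEspace T \<Omega> 1" for \<phi>
  proof (rule integrable_add)
    show "(\<lambda>x. 1/2 * (norm (grad \<phi> x))^2) integrable_on \<Omega>"
      using pw_const_abs_integrable[OF tri gradpw[OF that, of "\<lambda>v. 1/2 * (norm v)^2"]]
      by (simp add: absolutely_integrable_on_def)
    show "(\<lambda>x. F \<eta> (\<phi> x)) integrable_on \<Omega>"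
      using that by (intro cont_compact_integrable[OF cpt] contF) (simp add: FEspace_def)
  qed
  define a where "a = (\<lambda>x. grad \<phi>1 x \<bullet> grad \<phi>b x)"
  define b where "b = (\<lambda>x. (deriv (Fc \<eta>) (\<phi>1 x) + deriv (Fe \<eta>) (\<phi>n x)) * \<phi>b x)"
  have ia: "a integrable_on \<Omega>"
  proof -
    have "\<forall>I\<in>T. \<exists>c. \<forall>x\<in>interior (elem_set I). a x = c"
    proof
      fix I assume I: "I \<in> T"
      obtain v1 where v1: "\<forall>x\<in>interior (elem_set I). grad \<phi>1 x = v1" using FE_grad[OF \<phi>1 I] by blast
      obtain vb where vb: "\<forall>x\<in>interior (elem_set I). grad \<phi>b x = vb" using FE_grad[OF \<phi>bFE I] by blast
      show "\<exists>c. \<forall>x\<in>interior (elem_set I). a x = c" using v1 vb unfolding a_def by auto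
    qed
    then show ?thesis using pw_const_abs_integrable[OF tri] by (simp add: absolutely_integrable_on_def)
  qed
  have ib: "b integrable_on \<Omega>"
    unfolding b_def \<phi>b_def using assms(3)
    by (intro cont_compact_integrable[OF cpt]) (auto simp: dFc dFe intro!: continuous_intros c1 cn)
  have pt: "1/2 * (norm (grad \<phi>1 x))^2 + F \<eta> (\<phi>1 x) - (1/2 * (norm (grad \<phi>n x))^2 + F \<eta> (\<phi>n x))
      \<le> a x + b x" if x: "x \<in> \<Omega> - ?N" for x
  proof -
    obtain I where I: "I \<in> T" "x \<in> interior (elem_set I)" using ae_interior[OF tri] x by blast
    obtain v1 where v1: "(\<phi>1 has_derivative (\<lambda>h. v1 \<bullet> h)) (at x)" "grad \<phi>1 x = v1"
      using FE_grad[OF \<phi>1 I(1)] I(2) by blast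
    obtain vn where vn: "(\<phi>n has_derivative (\<lambda>h. vn \<bullet> h)) (at x)" "grad \<phi>n x = vn"
      using FE_grad[OF assms(8) I(1)] I(2) by blast
    have "(\<phi>b has_derivative (\<lambda>h. (v1 - vn) \<bullet> h)) (at x)"
      unfolding \<phi>b_def inner_diff_left by (intro has_derivative_diff v1 vn)
    then have gb: "grad \<phi>b x = v1 - vn" by (rule grad_eq)
    have "1/2 * (norm v1)^2 - 1/2 * (norm vn)^2 \<le> v1 \<bullet> (v1 - vn)" by (rule vec_ineq)
    moreover have "F \<eta> (\<phi>1 x) - F \<eta> (\<phi>n x) \<le> (deriv (Fc \<eta>) (\<phi>1 x) + deriv (Fe \<eta>) (\<phi>n x)) * (\<phi>1 x - \<phi>n x)"
      by (rule F_ineq[OF assms(3)])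
    ultimately show ?thesis unfolding a_def b_def \<phi>b_def[symmetric] gb v1(2) vn(2)
      by (simp add: \<phi>b_def)
  qed
  have "energy \<eta> \<Omega> \<phi>1 - energy \<eta> \<Omega> \<phi>n
      = integral \<Omega> (\<lambda>x. 1/2 * (norm (grad \<phi>1 x))^2 + F \<eta> (\<phi>1 x) - (1/2 * (norm (grad \<phi>n x))^2 + F \<eta> (\<phi>n x)))"
    unfolding energy_def by (rule integral_diff[symmetric, OF ie[OF \<phi>1] ie[OF assms(8)]])
  also have "\<dots> \<le> integral \<Omega> (\<lambda>x. a x + b x)"
    by (rule integral_le_ae[OF integrable_diff[OF ie[OF \<phi>1] ie[OF assms(8)]] integrable_add[OF ia ib] negN pt])
  also have "\<dots> = integral \<Omega> a + integral \<Omega> b" by (rule integral_add[OF ia ib])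
  also have "\<dots> = lumped T \<Omega> \<mu>1 \<phi>b" unfolding a_def b_def by (rule eq2[OF \<phi>bFE])
  also have "\<dots> = lumped T \<Omega> \<phi>b \<mu>1" unfolding lumped_def by (simp add: mult.commute)
  finally have E: "energy \<eta> \<Omega> \<phi>1 - energy \<eta> \<Omega> \<phi>n \<le> lumped T \<Omega> \<phi>b \<mu>1" .
  have L: "1 / dt * lumped T \<Omega> \<phi>b \<mu>1 + mob_form \<epsilon> T \<Omega> \<phi>1 \<mu>1 \<mu>1 = 0"
    using eq1[OF \<mu>1] unfolding \<phi>b_def .
  have "(energy \<eta> \<Omega> \<phi>1 - energy \<eta> \<Omega> \<phi>n) / dt \<le> lumped T \<Omega> \<phi>b \<mu>1 / dt"
    using E assms(6) by (rule divide_right_mono[OF _ less_imp_le])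
  then have "(energy \<eta> \<Omega> \<phi>1 - energy \<eta> \<Omega> \<phi>n) / dt + mob_form \<epsilon> T \<Omega> \<phi>1 \<mu>1 \<mu>1
      \<le> 1 / dt * lumped T \<Omega> \<phi>b \<mu>1 + mob_form \<epsilon> T \<Omega> \<phi>1 \<mu>1 \<mu>1" by simp
  then show ?thesis using mass L by simp
qed

end
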